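(* For either choice $\zeta\in\{q,-q^3\}$, the function $\mathcal{F}(\lambda_1,\dots,\lambda_{L-1}\mid v_1,v_2)=\langle\bar0|\mathcal{E}(\lambda_{L-1})\cdots\mathcal{E}(\lambda_1)\mathcal{B}(v_2)\mathcal{B}(v_1)|0\rangle$ can be written as $\mathcal{F}(\lambda_1,\dots,\lambda_{L-1}\mid v_1,v_2)=\omega(y_1)\,\mathcal{H}(\lambda_1,\dots,\lambda_{L-1}\mid v_1,v_2)$ with $y_1=e^{2v_1}$, $\omega(y)=\prod_{j=1}^L(y-e^{2\mu_j}\zeta)$, where $\mathcal{H}$ is a polynomial of degree $L-1$ in $y_1$ and has the same dependence on the other variables as $\mathcal{F}$ (i.e. it is a polynomial of degree $2L-1$ in each $x_i=e^{2\lambda_i}$ and in $y_2=e^{2v_2}$).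
   Context: Let $q\in\mathbb{C}\setminus\{0\}$ (with a fixed choice of $q^{1/2}$) and $\zeta\in\{q,-q^3\}$ ($\zeta=q$: Fateev–Zamolodchikov model; $\zeta=-q^3$: Izergin–Korepin model). For $\lambda\in\mathbb{C}$ put $x=e^{2\lambda}$ and define $a(\lambda)=(x-\zeta)(x-q^2)$, $b(\lambda)=q(x-1)(x-\zeta)$, $c(\lambda)=(1-q^2)(x-\zeta)$, $\bar c(\lambda)=x(1-q^2)(x-\zeta)$, and for $\alpha,\beta\in\{1,2,3\}$, with $\beta'=4-\beta$: $d_{\alpha,\beta}(\lambda)=q(x-1)(x-\zeta)+x(q^2-1)(\zeta-1)$ if $\alpha=\beta=2$; $d_{\alpha,\beta}(\lambda)=(x-1)[(x-\zeta)+x(q^2-1)]$ if $\alpha=\beta\neq 2$; $d_{\alpha,\beta}(\lambda)=(q^2-1)[\zeta(x-1)q^{(\alpha-\beta)/2}-\delta_{\alpha,\beta'}(x-\zeta)]$ if $\alpha<\beta$; $d_{\alpha,\beta}(\lambda)=x(q^2-1)[(x-1)q^{(\alpha-\beta)/2}-\delta_{\alpha,\beta'}(x-\zeta)]$ if $\alpha>\beta$. Let $e_1,e_2,e_3$ be the standard basis of $\mathbb{C}^3$ and $E_{\alpha,\beta}$ the unit matrices. Define $\mathcal{R}(\lambda)\in\mathrm{End}(\mathbb{C}^3\otimes\mathbb{C}^3)$ as the $9\times 9$ matrix in the ordered basis $e_1\otimes e_1,e_1\otimes e_2,e_1\otimes e_3,e_2\otimes e_1,e_2\otimes e_2,e_2\otimes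 e_3,e_3\otimes e_1,e_3\otimes e_2,e_3\otimes e_3$ (indices $1,\dots,9$) whose only nonzero entries (row, column) are: $(1,1)=a$; $(2,2)=b$, $(2,4)=c$; $(3,3)=d_{1,1}$, $(3,5)=d_{1,2}$, $(3,7)=d_{1,3}$; $(4,2)=\bar c$, $(4,4)=b$; $(5,3)=d_{2,1}$, $(5,5)=d_{2,2}$, $(5,7)=d_{2,3}$; $(6,6)=b$, $(6,8)=c$; $(7,3)=d_{3,1}$, $(7,5)=d_{3,2}$, $(7,7)=d_{3,3}$; $(8,6)=\bar c$, $(8,8)=b$; $(9,9)=a$ (all evaluated at $\lambda$). Fix $L\ge1$ and inhomogeneities $\mu_1,\dots,\mu_L\in\mathbb{C}$. With $V_a=V_1=\dots=V_L=\mathbb{C}^3$, let $\mathcal{T}(\lambda)=\mathcal{R}_{a1}(\lambda-\mu_1)\cdots\mathcal{R}_{aL}(\lambda-\mu_L)$, where $\mathcal{R}_{aj}$ acts as $\mathcal{R}$ on $V_a\otimes V_j$. Write $\mathcal{T}(\lambda)=\sum_{\alpha,\beta}E_{\alpha,\beta}\otimes\mathcal{T}_\alpha^\beta(\lambda)$ and set $\mathcal{B}(\lambda)=\mathcal{T}_1^2(\lambda)$, $\mathcal{E}(\lambda)=\mathcal{T}_1^3(\lambda)$, operators on $V_1\otimes\cdots\otimes V_L$. Let $|0\rangle=e_1^{\otimes L}$ and let $\langle\bar0|$ be the dual vector of $e_3^{\otimes L}$. *)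

theory Defs
  imports Complex_Main "HOL-Computational_Algebra.Polynomial"
begin

text \<open>Weights of the R-matrix. Parameters: q, a fixed square root sq of q (sq^2 = q),
  zeta, and x = exp(2 lambda). Indices alpha, beta range over {1,2,3}.\<close>

definition wa :: "complex \<Rightarrow> complex \<Rightarrow> complex \<Rightarrow> complex" where
  "wa q z x = (x - z) * (x - q^2)"
definition wb :: "complex \<Rightarrow> complex \<Rightarrow> complex \<Rightarrow> complex" where
  "wb q z x = q * (x - 1) * (x - z)"
definition wc :: "complex \<Rightarrow> complex \<Rightarrow> complex \<Rightarrow> complex" where
  "wc q z x = (1 - q^2) * (x - z)"
definition wcbar :: "complex \<Rightarrow> complex \<Rightarrow> complex \<Rightarrow> complex" where
  "wcbar q z x = x * (1 - q^2) * (x - z)"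

definition wd :: "complex \<Rightarrow> complex \<Rightarrow> complex \<Rightarrow> nat \<Rightarrow> nat \<Rightarrow> complex \<Rightarrow> complex" where
  "wd q sq z \<alpha> \<beta> x =
    (if \<alpha> = 2 \<and> \<beta> = 2 then q * (x - 1) * (x - z) + x * (q^2 - 1) * (z - 1)
     else if \<alpha> = \<beta> then (x - 1) * ((x - z) + x * (q^2 - 1))
     else if \<alpha> < \<beta> then (q^2 - 1) * (z * (x - 1) * sq powi (int \<alpha> - int \<beta>)
                                   - (if \<alpha> = 4 - \<beta> then 1 else 0) * (x - z))
     else x * (q^2 - 1) * ((x - 1) * sq powi (int \<alpha> - int \<beta>)
                                   - (if \<alpha> = 4 - \<beta> then 1 else 0) * (x - z)))"

definition R9 :: "complex \<Rightarrow> complex \<Rightarrow> complex \<Rightarrow> complex \<Rightarrow> nat \<Rightarrow> nat \<Rightarrow> complex" where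
  "R9 q sq z lm r s =
    (let x = exp (2 * lm) in
     if (r, s) = (1, 1) then wa q z x
     else if (r, s) = (2, 2) then wb q z x
     else if (r, s) = (2, 4) then wc q z x
     else if (r, s) = (3, 3) then wd q sq z 1 1 x
     else if (r, s) = (3, 5) then wd q sq z 1 2 x
     else if (r, s) = (3, 7) then wd q sq z 1 3 x
     else if (r, s) = (4, 2) then wcbar q z x
     else if (r, s) = (4, 4) then wb q z x
     else if (r, s) = (5, 3) then wd q sq z 2 1 x
     else if (r, s) = (5, 5) then wd q sq z 2 2 x
     else if (r, s) = (5, 7) then wd q sq z 2 3 x
     else if (r, s) = (6, 6) then wb q z x
     else if (r, s) = (6, 8) then wc q z x
     else if (r, s) = (7, 3) then wd q sq z 3 1 x
     else if (r, s) = (7, 5) then wd q sq z 3 2 x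
     else if (r, s) = (7, 7) then wd q sq z 3 3 x
     else if (r, s) = (8, 6) then wcbar q z x
     else if (r, s) = (8, 8) then wb q z x
     else if (r, s) = (9, 9) then wa q z x
     else 0)"

text \<open>Matrix element <e_alpha (x) e_i'| R(lambda) |e_gamma (x) e_i>, basis index 3(alpha-1)+i.\<close>
definition Rent :: "complex \<Rightarrow> complex \<Rightarrow> complex \<Rightarrow> complex \<Rightarrow> nat \<Rightarrow> nat \<Rightarrow> nat \<Rightarrow> nat \<Rightarrow> complex" where
  "Rent q sq z lm \<alpha> i' \<gamma> i = R9 q sq z lm (3 * (\<alpha> - 1) + i') (3 * (\<gamma> - 1) + i)"

text \<open>Basis configurations of V_1 (x) ... (x) V_L: lists c of length L with entries in {1,2,3};
  c ! (j-1) is the state of site j.\<close>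
definition cfgs :: "nat \<Rightarrow> nat list set" where
  "cfgs L = {c. length c = L \<and> set c \<subseteq> {1,2,3}}"

text \<open>Auxiliary-space paths alpha = a_0, a_1, ..., a_L = beta.\<close>
definition paths :: "nat \<Rightarrow> nat \<Rightarrow> nat \<Rightarrow> nat list set" where
  "paths L \<alpha> \<beta> = {a. length a = Suc L \<and> set a \<subseteq> {1,2,3} \<and> a ! 0 = \<alpha> \<and> a ! L = \<beta>}"

text \<open>Matrix element <c'| T_alpha^beta(lambda) |c> of the monodromy matrix
  T(lambda) = R_a1(lambda - mu_1) ... R_aL(lambda - mu_L).\<close>
definition Tent :: "complex \<Rightarrow> complex \<Rightarrow> complex \<Rightarrow> (nat \<Rightarrow> complex) \<Rightarrow> nat \<Rightarrow> nat \<Rightarrow> nat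
    \<Rightarrow> complex \<Rightarrow> nat list \<Rightarrow> nat list \<Rightarrow> complex" where
  "Tent q sq z mu L \<alpha> \<beta> lm c' c =
    (\<Sum>a\<in>paths L \<alpha> \<beta>. \<Prod>j<L. Rent q sq z (lm - mu (Suc j)) (a ! j) (c' ! j) (a ! Suc j) (c ! j))"

definition opapp :: "nat \<Rightarrow> (nat list \<Rightarrow> nat list \<Rightarrow> complex) \<Rightarrow> (nat list \<Rightarrow> complex) \<Rightarrow> nat list \<Rightarrow> complex" where
  "opapp L A v = (\<lambda>c'. \<Sum>c\<in>cfgs L. A c' c * v c)"

definition Bop where "Bop q sq z mu L lm = Tent q sq z mu L 1 2 lm"
definition Eop where "Eop q sq z mu L lm = Tent q sq z mu L 1 3 lm"

definition vac :: "nat \<Rightarrow> nat list \<Rightarrow> complex" where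
  "vac L = (\<lambda>c. if c = replicate L 1 then 1 else 0)"

text \<open>F(lambda_1..lambda_{L-1} | v1, v2) = <0bar| E(lambda_{L-1}) ... E(lambda_1) B(v2) B(v1) |0>,
  with lambda_i = lam i for i = 1..L-1.\<close>
definition Ffun :: "complex \<Rightarrow> complex \<Rightarrow> complex \<Rightarrow> (nat \<Rightarrow> complex) \<Rightarrow> nat
    \<Rightarrow> (nat \<Rightarrow> complex) \<Rightarrow> complex \<Rightarrow> complex \<Rightarrow> complex" where
  "Ffun q sq z mu L lam v1 v2 =
    fold (\<lambda>i w. opapp L (Eop q sq z mu L (lam i)) w) [1..<L]
      (opapp L (Bop q sq z mu L v2) (opapp L (Bop q sq z mu L v1) (vac L)))
    (replicate L 3)"

definition omega :: "complex \<Rightarrow> (nat \<Rightarrow> complex) \<Rightarrow> nat \<Rightarrow> complex \<Rightarrow> complex" where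
  "omega z mu L y = (\<Prod>j=1..L. (y - exp (2 * mu j) * z))"

end

theory Submission
  imports Defs
begin

definition R9x :: "complex \<Rightarrow> complex \<Rightarrow> complex \<Rightarrow> complex \<Rightarrow> nat \<Rightarrow> nat \<Rightarrow> complex" where
  "R9x q sq z x r s =
    (if (r, s) = (1, 1) then wa q z x
     else if (r, s) = (2, 2) then wb q z x
     else if (r, s) = (2, 4) then wc q z x
     else if (r, s) = (3, 3) then wd q sq z 1 1 x
     else if (r, s) = (3, 5) then wd q sq z 1 2 x
     else if (r, s) = (3, 7) then wd q sq z 1 3 x
     else if (r, s) = (4, 2) then wcbar q z x
     else if (r, s) = (4, 4) then wb q z x
     else if (r, s) = (5, 3) then wd q sq z 2 1 x
     else if (r, s) = (5, 5) then wd q sq z 2 2 x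
     else if (r, s) = (5, 7) then wd q sq z 2 3 x
     else if (r, s) = (6, 6) then wb q z x
     else if (r, s) = (6, 8) then wc q z x
     else if (r, s) = (7, 3) then wd q sq z 3 1 x
     else if (r, s) = (7, 5) then wd q sq z 3 2 x
     else if (r, s) = (7, 7) then wd q sq z 3 3 x
     else if (r, s) = (8, 6) then wcbar q z x
     else if (r, s) = (8, 8) then wb q z x
     else if (r, s) = (9, 9) then wa q z x
     else 0)"

lemma R9_R9x: "R9 q sq z lm r s = R9x q sq z (exp (2 * lm)) r s"
  unfolding R9_def R9x_def Let_def by simp

definition IP :: "(complex \<Rightarrow> complex) \<Rightarrow> bool" where
  "IP f \<longleftrightarrow> (\<forall>x. 2 * f x = 2 * f 0 + (f 1 - f (-1)) * x + (f 1 + f (-1) - 2 * f 0) * x^2)"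

lemma IP_wa: "IP (\<lambda>x. wa q z x)" unfolding IP_def wa_def by (simp add: algebra_simps power2_eq_square)
lemma IP_wb: "IP (\<lambda>x. wb q z x)" unfolding IP_def wb_def by (simp add: algebra_simps power2_eq_square)
lemma IP_wc: "IP (\<lambda>x. wc q z x)" unfolding IP_def wc_def by (simp add: algebra_simps power2_eq_square)
lemma IP_wcbar: "IP (\<lambda>x. wcbar q z x)" unfolding IP_def wcbar_def by (simp add: algebra_simps power2_eq_square)
lemma IP_wd: "IP (\<lambda>x. wd q sq z a b x)"
  unfolding IP_def wd_def
  by (cases "a = 2 \<and> b = 2"; cases "a = b"; cases "a < b"; auto simp add: algebra_simps power2_eq_square)
lemma IP_0: "IP (\<lambda>x. 0)" unfolding IP_def by simp

lemma IP_if: "IP f \<Longrightarrow> IP g \<Longrightarrow> IP (\<lambda>x. if c then f x else g x)"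
  by (cases c) auto
lemma R9x_IP: "IP (\<lambda>x. R9x q sq z x r s)"
  unfolding R9x_def by (intro IP_if IP_wa IP_wb IP_wc IP_wcbar IP_wd IP_0)
definition ZZ :: "(complex \<Rightarrow> complex) \<Rightarrow> bool" where
  "ZZ f \<longleftrightarrow> f 1 + f (-1) - 2 * f 0 = 0"
lemma ZZ_if: "(c \<Longrightarrow> ZZ f) \<Longrightarrow> (\<not> c \<Longrightarrow> ZZ g) \<Longrightarrow> ZZ (\<lambda>x. if c then f x else g x)"
  by (cases c) auto
lemma R9x_ZZ: assumes "(r - 1) div 3 < (s - 1) div (3::nat)"
  shows "ZZ (\<lambda>x. R9x q sq z x r s)"
  unfolding R9x_def using assms
  apply (intro ZZ_if)
  apply (auto simp: ZZ_def wc_def wd_def algebra_simps)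
  done

definition Qx :: "complex \<Rightarrow> complex \<Rightarrow> complex \<Rightarrow> nat \<Rightarrow> nat \<Rightarrow> complex" where
  "Qx q z x r s = (if (r,s) = (1,1) then x - q^2 else if (r,s) = (2,4) then 1 - q^2
     else if (r,s) = (4,4) then q * (x - 1) else 0)"

lemma R9x_fact1: "R9x q sq z x r 1 = (x - z) * Qx q z x r 1"
  unfolding R9x_def Qx_def wa_def by simp
lemma R9x_fact4: "R9x q sq z x r 4 = (x - z) * Qx q z x r 4"
  unfolding R9x_def Qx_def wb_def wc_def by (simp add: mult.commute mult.left_commute)
lemma R9x_fact: "s \<in> {1,4} \<Longrightarrow> R9x q sq z x r s = (x - z) * Qx q z x r s"
  using R9x_fact1 R9x_fact4 by auto

lemma R9x_zero: "r \<in> {7,8,9} \<Longrightarrow> s \<in> {1,4} \<Longrightarrow> R9x q sq z x r s = 0"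
  by (elim insertE emptyE; simp add: R9x_def)

lemma Qx_zero: "r \<in> {7,8,9} \<Longrightarrow> Qx q z x r s = 0"
  by (elim insertE emptyE; simp add: Qx_def)

lemma Qx_interp: "Qx q z x r s = Qx q z 0 r s + (Qx q z 1 r s - Qx q z 0 r s) * x"
  unfolding Qx_def by (simp add: algebra_simps)

lemma Qx_inc:
  assumes "\<alpha> \<in> {1,2,3}" "\<gamma> \<in> {1,2,3}" "i' \<in> {1,2,3}" "\<alpha> < \<gamma>"
  shows "Qx q z 1 (3*(\<alpha>-1)+i') (3*(\<gamma>-1)+1) - Qx q z 0 (3*(\<alpha>-1)+i') (3*(\<gamma>-1)+1) = 0"
  using assms unfolding Qx_def by auto

definition ep :: "nat \<Rightarrow> (complex \<Rightarrow> complex) \<Rightarrow> bool" where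
  "ep d f \<longleftrightarrow> (\<exists>p. degree p \<le> d \<and> (\<forall>t. f t = poly p (exp (2 * t))))"

lemma ep_const: "ep d (\<lambda>t. c)"
  unfolding ep_def by (rule exI[of _ "[:c:]"]) simp

lemma ep_mono: "ep d f \<Longrightarrow> d \<le> e \<Longrightarrow> ep e f"
  unfolding ep_def by (meson order_trans)

lemma ep_add: "ep d f \<Longrightarrow> ep d g \<Longrightarrow> ep d (\<lambda>t. f t + g t)"
  unfolding ep_def
proof (elim exE conjE)
  fix p p' assume "degree p \<le> d" "\<forall>t. f t = poly p (exp (2 * t))"
     "degree p' \<le> d" "\<forall>t. g t = poly p' (exp (2 * t))"
  then show "\<exists>p. degree p \<le> d \<and> (\<forall>t. f t + g t = poly p (exp (2 * t)))"
    by (intro exI[of _ "p + p'"]) (auto intro: order_trans[OF degree_add_le])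
qed

lemma ep_mult: "ep d f \<Longrightarrow> ep e g \<Longrightarrow> ep (d + e) (\<lambda>t. f t * g t)"
  unfolding ep_def
proof (elim exE conjE)
  fix p p' assume "degree p \<le> d" "\<forall>t. f t = poly p (exp (2 * t))"
     "degree p' \<le> e" "\<forall>t. g t = poly p' (exp (2 * t))"
  then show "\<exists>p. degree p \<le> d + e \<and> (\<forall>t. f t * g t = poly p (exp (2 * t)))"
    by (intro exI[of _ "p * p'"]) (auto intro: order_trans[OF degree_mult_le])
qed

lemma ep_cmult: "ep d f \<Longrightarrow> ep d (\<lambda>t. c * f t)"
  using ep_mult[OF ep_const[of 0 c]] by simp

lemma ep_multc: "ep d f \<Longrightarrow> ep d (\<lambda>t. f t * c)"
  using ep_mult[OF _ ep_const[of 0 c]] by simp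

lemma ep_sum: "(\<And>a. a \<in> A \<Longrightarrow> ep d (f a)) \<Longrightarrow> ep d (\<lambda>t. \<Sum>a\<in>A. f a t)"
proof (cases "finite A")
  case True
  assume h: "\<And>a. a \<in> A \<Longrightarrow> ep d (f a)"
  from True h show ?thesis
  proof (induction A rule: finite_induct)
    case empty then show ?case by (simp add: ep_const)
  next
    case (insert x F)
    then show ?case by (simp add: ep_add)
  qed
next
  case False then show ?thesis by (simp add: ep_const)
qed

lemma ep_prod: "finite A \<Longrightarrow> (\<And>j. j \<in> A \<Longrightarrow> ep (d j) (f j)) \<Longrightarrow> ep (\<Sum>j\<in>A. d j) (\<lambda>t. \<Prod>j\<in>A. f j t)"
proof (induction A rule: finite_induct)
  case empty then show ?case by (simp add: ep_const)
next
  case (insert x F)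
  then show ?case by (simp add: ep_mult)
qed

lemma ep_shift:
  assumes "\<And>x. f x = poly p x" "degree p \<le> d"
  shows "ep d (\<lambda>t. f (exp (2 * (t - m))))"
  unfolding ep_def
proof (intro exI[of _ "p \<circ>\<^sub>p [:0, exp (-(2*m)):]"] conjI allI)
  show "degree (p \<circ>\<^sub>p [:0, exp (- (2 * m)):]) \<le> d"
    using assms(2) by (simp add: degree_pcompose)
  fix t
  have "exp (2 * (t - m)) = exp (-(2*m)) * exp (2 * t)"
    by (simp add: algebra_simps flip: exp_add)
  then show "f (exp (2 * (t - m))) = poly (p \<circ>\<^sub>p [:0, exp (- (2 * m)):]) (exp (2 * t))"
    by (simp add: poly_pcompose assms(1) mult.commute)
qed

lemma IP_poly: "IP f \<Longrightarrow> f x = poly [:f 0, (f 1 - f (-1))/2, (f 1 + f (-1) - 2 * f 0)/2:] x"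
proof -
  assume "IP f"
  then have h: "2 * f x = 2 * f 0 + (f 1 - f (-1)) * x + (f 1 + f (-1) - 2 * f 0) * x^2"
    unfolding IP_def by blast
  have "f x = (2 * f x) / 2" by simp
  also have "\<dots> = (2 * f 0 + (f 1 - f (-1)) * x + (f 1 + f (-1) - 2 * f 0) * x^2) / 2"
    by (simp only: h)
  also have "\<dots> = poly [:f 0, (f 1 - f (-1))/2, (f 1 + f (-1) - 2 * f 0)/2:] x"
    by (simp add: add_divide_distrib diff_divide_distrib power2_eq_square algebra_simps)
  finally show ?thesis .
qed
lemma divlem: "(\<alpha>::nat) \<ge> 1 \<Longrightarrow> i \<in> {1,2,3} \<Longrightarrow> (3*(\<alpha>-1)+i-1) div 3 = \<alpha>-1"
  by (elim insertE emptyE) auto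
lemma deg3: "degree [:a, b, c::complex:] \<le> 2"
  by (auto simp: degree_pCons_eq_if)

lemma deg2: "degree [:a, b::complex:] \<le> 1"
  by (auto simp: degree_pCons_eq_if)

lemma Rent_ep2: "ep 2 (\<lambda>t. Rent q sq z (t - m) \<alpha> i' \<gamma> i)"
proof -
  let ?f = "\<lambda>x. R9x q sq z x (3 * (\<alpha> - 1) + i') (3 * (\<gamma> - 1) + i)"
  have "ep 2 (\<lambda>t. ?f (exp (2 * (t - m))))"
    by (rule ep_shift[OF IP_poly[OF R9x_IP]]) (rule deg3)
  then show ?thesis by (simp add: Rent_def R9_R9x)
qed

lemma Rent_ep1:
  assumes "\<alpha> \<in> {1,2,3}" "\<gamma> \<in> {1,2,3}" "i \<in> {1,2,3}" "i' \<in> {1,2,3}" "\<alpha> < \<gamma>"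
  shows "ep 1 (\<lambda>t. Rent q sq z (t - m) \<alpha> i' \<gamma> i)"
proof -
  let ?r = "3 * (\<alpha> - 1) + i'" and ?s = "3 * (\<gamma> - 1) + i"
  let ?f = "\<lambda>x. R9x q sq z x ?r ?s"
  have "(?r - 1) div 3 = \<alpha> - 1" using assms by (intro divlem) auto
  moreover have "(?s - 1) div 3 = \<gamma> - 1" using assms by (intro divlem) auto
  ultimately have d: "(?r - 1) div 3 < (?s - 1) div 3" using assms by auto
  have z: "?f 1 + ?f (-1) - 2 * ?f 0 = 0" using R9x_ZZ[OF d] unfolding ZZ_def .
  have c0: "(?f 1 + ?f (-1) - 2 * ?f 0)/2 = 0" using z by (simp only: div_0)
  have "\<And>x. ?f x = poly [:?f 0, (?f 1 - ?f (-1))/2:] x"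
  proof -
    fix x
    have "?f x = poly [:?f 0, (?f 1 - ?f (-1))/2, (?f 1 + ?f (-1) - 2 * ?f 0)/2:] x"
      by (rule IP_poly[OF R9x_IP])
    also have "\<dots> = poly [:?f 0, (?f 1 - ?f (-1))/2:] x" by (simp only: c0 pCons_0_0)
    finally show "?f x = poly [:?f 0, (?f 1 - ?f (-1))/2:] x" .
  qed
  then have "ep 1 (\<lambda>t. ?f (exp (2 * (t - m))))"
    by (rule ep_shift) (rule deg2)
  then show ?thesis by (simp add: Rent_def R9_R9x)
qed

lemma Qx_poly: "Qx q z x r s = poly [:Qx q z 0 r s, Qx q z 1 r s - Qx q z 0 r s:] x"
  by (subst Qx_interp) (simp add: mult.commute)

lemma Qx_ep1: "ep 1 (\<lambda>t. Qx q z (exp (2 * (t - m))) r s)"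
  by (rule ep_shift[OF Qx_poly]) (rule deg2)

lemma Qx_ep0:
  assumes "\<alpha> \<in> {1,2,3}" "\<gamma> \<in> {1,2,3}" "i' \<in> {1,2,3}" "\<alpha> < \<gamma>"
  shows "ep 0 (\<lambda>t. Qx q z (exp (2 * (t - m))) (3*(\<alpha>-1)+i') (3*(\<gamma>-1)+1))"
proof (rule ep_shift)
  fix x
  show "Qx q z x (3*(\<alpha>-1)+i') (3*(\<gamma>-1)+1) = poly [:Qx q z 0 (3*(\<alpha>-1)+i') (3*(\<gamma>-1)+1):] x"
    using Qx_poly[of q z x "3*(\<alpha>-1)+i'" "3*(\<gamma>-1)+1"] Qx_inc[OF assms, of q z] by simp
qed simp

lemma path_inc:
  assumes "(a::nat list) ! 0 < a ! L"
  obtains j where "j < L" "a ! j < a ! Suc j"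
proof -
  have "\<exists>j<L. a ! j < a ! Suc j"
  proof (rule ccontr)
    assume "\<not> ?thesis"
    then have h: "\<And>j. j < L \<Longrightarrow> a ! Suc j \<le> a ! j" by auto
    have "\<And>n. n \<le> L \<Longrightarrow> a ! n \<le> a ! 0"
    proof -
      fix n show "n \<le> L \<Longrightarrow> a ! n \<le> a ! 0"
      proof (induction n)
        case 0 then show ?case by simp
      next
        case (Suc n)
        then have "a ! Suc n \<le> a ! n" using h by simp
        with Suc show ?case by simp
      qed
    qed
    then show False using assms by (meson le_refl not_le)
  qed
  then show ?thesis using that by blast
qed
lemma prod_path_ep:
  assumes "(a::nat list) ! 0 < a ! L" "\<And>j. j < L \<Longrightarrow> ep (Suc d) (f j)"
    "\<And>j. j < L \<Longrightarrow> a ! j < a ! Suc j \<Longrightarrow> ep d (f j)"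
  shows "ep (Suc d * L - 1) (\<lambda>t. \<Prod>j<L. f j t)"
proof -
  obtain j0 where j0: "j0 < L" "a ! j0 < a ! Suc j0" using path_inc[OF assms(1)] by blast
  have eq: "(\<lambda>t. \<Prod>j<L. f j t) = (\<lambda>t. f j0 t * (\<Prod>j\<in>{..<L} - {j0}. f j t))"
    using j0 by (simp add: prod.remove)
  have "ep (d + (\<Sum>j\<in>{..<L} - {j0}. Suc d)) (\<lambda>t. f j0 t * (\<Prod>j\<in>{..<L} - {j0}. f j t))"
    by (intro ep_mult assms(3) j0 ep_prod) (auto intro: assms(2))
  moreover have "d + (\<Sum>j\<in>{..<L} - {j0}. Suc d) = Suc d * L - 1"
  proof -
    have "card ({..<L} - {j0}) = L - 1" using j0 by simp
    moreover obtain L' where "L = Suc L'" using j0 by (cases L) auto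
    ultimately show ?thesis by simp
  qed
  ultimately show ?thesis using eq by simp
qed

lemma cfgs_fin: "finite (cfgs L)"
proof -
  have "cfgs L = {xs. set xs \<subseteq> {1,2,3::nat} \<and> length xs = L}" unfolding cfgs_def by auto
  then show ?thesis using finite_lists_length_eq[of "{1,2,3::nat}" L] by simp
qed

lemma cfgs_nth: assumes "c \<in> cfgs L" "j < L" shows "c ! j \<in> {1,2,3}"
proof -
  have "length c = L" "set c \<subseteq> {1,2,3}" using assms(1) unfolding cfgs_def by auto
  moreover have "c ! j \<in> set c" using assms(2) \<open>length c = L\<close> by (intro nth_mem) simp
  ultimately show ?thesis by blast
qed

lemma paths_nth: assumes "a \<in> paths L \<alpha> \<beta>" "j \<le> L" shows "a ! j \<in> {1,2,3}"
proof -
  have "length a = Suc L" "set a \<subseteq> {1,2,3}" using assms(1) unfolding paths_def by auto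
  moreover have "a ! j \<in> set a" using assms(2) \<open>length a = Suc L\<close> by (intro nth_mem) simp
  ultimately show ?thesis by blast
qed

lemma rep_cfgs: "k \<in> {1,2,3} \<Longrightarrow> replicate L k \<in> cfgs L"
  unfolding cfgs_def by auto

lemma Tent_ep:
  assumes "\<alpha> < \<beta>" "c \<in> cfgs L" "c' \<in> cfgs L"
  shows "ep (2 * L - 1) (\<lambda>t. Tent q sq z mu L \<alpha> \<beta> t c' c)"
proof -
  have "ep (Suc 1 * L - 1) (\<lambda>t. \<Prod>j<L. Rent q sq z (t - mu (Suc j)) (a!j) (c'!j) (a!Suc j) (c!j))"
    if a: "a \<in> paths L \<alpha> \<beta>" for a
  proof (rule prod_path_ep[where a=a and f="\<lambda>j t. Rent q sq z (t - mu (Suc j)) (a!j) (c'!j) (a!Suc j) (c!j)"])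
    show "a ! 0 < a ! L" using a assms by (simp add: paths_def)
    show "ep (Suc 1) (\<lambda>t. Rent q sq z (t - mu (Suc j)) (a!j) (c'!j) (a!Suc j) (c!j))" for j
      using Rent_ep2 by (simp add: numeral_2_eq_2[symmetric])
    show "ep 1 (\<lambda>t. Rent q sq z (t - mu (Suc j)) (a!j) (c'!j) (a!Suc j) (c!j))"
      if "j < L" "a ! j < a ! Suc j" for j
      using that a assms by (intro Rent_ep1 paths_nth cfgs_nth) auto
  qed
  then show ?thesis unfolding Tent_def by (intro ep_sum) (simp add: mult_2)
qed

definition psi :: "complex \<Rightarrow> complex \<Rightarrow> (nat \<Rightarrow> complex) \<Rightarrow> nat \<Rightarrow> complex \<Rightarrow> nat list \<Rightarrow> complex" where
  "psi q z mu L v c' = (\<Prod>j<L. exp (-(2 * mu (Suc j)))) *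
     (\<Sum>a\<in>paths L 1 2. \<Prod>j<L. Qx q z (exp (2 * (v - mu (Suc j)))) (3*(a!j-1) + c'!j) (3*(a!Suc j - 1) + 1))"

lemma psi_ep:
  assumes "c' \<in> cfgs L"
  shows "ep (L - 1) (\<lambda>v. psi q z mu L v c')"
proof -
  have "ep (Suc 0 * L - 1) (\<lambda>t. \<Prod>j<L. Qx q z (exp (2 * (t - mu (Suc j)))) (3*(a!j-1) + c'!j) (3*(a!Suc j - 1) + 1))"
    if a: "a \<in> paths L 1 2" for a
  proof (rule prod_path_ep[where a=a])
    show "a ! 0 < a ! L" using a by (simp add: paths_def)
    show "ep (Suc 0) (\<lambda>t. Qx q z (exp (2 * (t - mu (Suc j)))) (3*(a!j-1) + c'!j) (3*(a!Suc j - 1) + 1))" for j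
      using Qx_ep1 by simp
    show "ep 0 (\<lambda>t. Qx q z (exp (2 * (t - mu (Suc j)))) (3*(a!j-1) + c'!j) (3*(a!Suc j - 1) + 1))"
      if "j < L" "a ! j < a ! Suc j" for j
      using that a assms by (intro Qx_ep0 paths_nth cfgs_nth) auto
  qed
  then show ?thesis unfolding psi_def by (intro ep_cmult ep_sum) simp
qed

lemma descent:
  assumes "(a::nat list) ! L \<noteq> 3" "j < L" "a ! Suc j = 3"
  shows "\<exists>m<L. a ! m = 3 \<and> a ! Suc m \<noteq> 3"
proof (rule ccontr)
  assume "\<not> ?thesis"
  then have h: "\<And>m. m < L \<Longrightarrow> a ! m = 3 \<Longrightarrow> a ! Suc m = 3" by auto
  have "\<And>k. Suc j + k \<le> L \<Longrightarrow> a ! (Suc j + k) = 3"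
  proof -
    fix k show "Suc j + k \<le> L \<Longrightarrow> a ! (Suc j + k) = 3"
    proof (induction k)
      case 0 then show ?case using assms by simp
    next
      case (Suc k)
      then have "a ! (Suc j + k) = 3" by simp
      then have "a ! Suc (Suc j + k) = 3" using h Suc.prems by simp
      then show ?case by simp
    qed
  qed
  from this[of "L - Suc j"] assms show False by simp
qed

lemma path_fact:
  assumes a: "a \<in> paths L 1 2" and c: "c' \<in> cfgs L"
  shows "(\<Prod>j<L. R9x q sq z (X j) (3*(a!j-1) + c'!j) (3*(a!Suc j - 1) + 1))
     = (\<Prod>j<L. (X j - z)) * (\<Prod>j<L. Qx q z (X j) (3*(a!j-1) + c'!j) (3*(a!Suc j - 1) + 1))"
proof (cases "\<forall>j<L. a ! Suc j \<noteq> 3")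
  case True
  have "R9x q sq z (X j) (3*(a!j-1) + c'!j) (3*(a!Suc j - 1) + 1)
      = (X j - z) * Qx q z (X j) (3*(a!j-1) + c'!j) (3*(a!Suc j - 1) + 1)" if "j < L" for j
  proof (rule R9x_fact)
    have "a ! Suc j \<in> {1,2,3}" using a that by (intro paths_nth) auto
    then show "3*(a!Suc j - 1) + 1 \<in> {1,4}" using True that by auto
  qed
  then show ?thesis by (simp add: prod.distrib[symmetric])
next
  case False
  then obtain j where j: "j < L" "a ! Suc j = 3" by auto
  have "a ! L \<noteq> 3" using a by (simp add: paths_def)
  then obtain m where m: "m < L" "a ! m = 3" "a ! Suc m \<noteq> 3" using descent j by blast
  have "a ! Suc m \<in> {1,2,3}" using a m by (intro paths_nth) auto
  then have s: "3*(a!Suc m - 1) + 1 \<in> {1,4}" using m by auto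
  have r: "3*(a!m-1) + c'!m \<in> {7,8,9}" using m cfgs_nth[OF c m(1)] by auto
  have "R9x q sq z (X m) (3*(a!m-1) + c'!m) (3*(a!Suc m - 1) + 1) = 0" by (rule R9x_zero[OF r s])
  moreover have "Qx q z (X m) (3*(a!m-1) + c'!m) (3*(a!Suc m - 1) + 1) = 0" by (rule Qx_zero[OF r])
  ultimately show ?thesis using m(1) by (metis (no_types, lifting) finite_lessThan lessThan_iff mult_zero_right prod_zero_iff)
qed

lemma exp_shift_fact: fixes v m z :: complex shows "exp (2 * (v - m)) - z = exp (-(2 * m)) * (exp (2 * v) - exp (2 * m) * z)"
proof -
  have "exp (-(2 * m)) * exp (2 * v) = exp (-(2 * m) + 2 * v)" by (rule exp_add[symmetric])
  also have "-(2 * m) + 2 * v = 2 * (v - m)" by (simp add: algebra_simps)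
  finally have e1': "exp (-(2 * m)) * exp (2 * v) = exp (2 * (v - m))" .
  note e1 = e1'[symmetric]
  have e2: "exp (-(2 * m)) * (exp (2 * m) * z) = z" by (simp add: mult.assoc[symmetric] flip: exp_add)
  show ?thesis unfolding e1 by (simp only: e2 right_diff_distrib)
qed

lemma omega_fact: "(\<Prod>j<L. (exp (2 * (v - mu (Suc j))) - z)) = (\<Prod>j<L. exp (-(2 * mu (Suc j)))) * omega z mu L (exp (2 * v))"
  unfolding omega_def exp_shift_fact prod.distrib
  by (simp add: prod.atLeast1_atMost_eq)

lemma B_vac:
  assumes c: "c' \<in> cfgs L"
  shows "opapp L (Bop q sq z mu L v) (vac L) c' = omega z mu L (exp (2 * v)) * psi q z mu L v c'"
proof -
  let ?X = "\<lambda>j. exp (2 * (v - mu (Suc j)))"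
  have "opapp L (Bop q sq z mu L v) (vac L) c' = (\<Sum>c\<in>cfgs L. if c = replicate L 1 then Bop q sq z mu L v c' c else 0)"
    unfolding opapp_def vac_def by (intro sum.cong) auto
  also have "\<dots> = Tent q sq z mu L 1 2 v c' (replicate L 1)"
    using cfgs_fin rep_cfgs[of 1 L] by (simp add: Bop_def)
  also have "\<dots> = (\<Sum>a\<in>paths L 1 2. \<Prod>j<L. R9x q sq z (?X j) (3*(a!j-1) + c'!j) (3*(a!Suc j - 1) + 1))"
    unfolding Tent_def Rent_def R9_R9x by (intro sum.cong prod.cong) auto
  also have "\<dots> = (\<Sum>a\<in>paths L 1 2. (\<Prod>j<L. (?X j - z)) * (\<Prod>j<L. Qx q z (?X j) (3*(a!j-1) + c'!j) (3*(a!Suc j - 1) + 1)))"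
    using c by (intro sum.cong path_fact) auto
  also have "\<dots> = omega z mu L (exp (2 * v)) * psi q z mu L v c'"
    unfolding psi_def omega_fact sum_distrib_left[symmetric] by (simp add: ac_simps)
  finally show ?thesis .
qed

lemma opapp_cong: "(\<And>c. c \<in> cfgs L \<Longrightarrow> w c = w' c) \<Longrightarrow> opapp L A w = opapp L A w'"
  unfolding opapp_def by (intro ext sum.cong) auto

lemma opapp_scale: "opapp L A (\<lambda>c. k * w c) = (\<lambda>c'. k * opapp L A w c')"
  unfolding opapp_def by (simp add: sum_distrib_left ac_simps)

lemma fold_scale:
  "fold (\<lambda>i w. opapp L (M i) w) xs (\<lambda>c. k * w c) = (\<lambda>c. k * fold (\<lambda>i w. opapp L (M i) w) xs w c)"
proof (induction xs arbitrary: w)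
  case Nil then show ?case by simp
next
  case (Cons i xs)
  then show ?case by (simp add: opapp_scale)
qed

lemma opapp_ep_vec: "(\<And>c. c \<in> cfgs L \<Longrightarrow> ep d (\<lambda>t. w t c)) \<Longrightarrow> ep d (\<lambda>t. opapp L A (w t) c')"
  unfolding opapp_def by (intro ep_sum ep_cmult) auto

lemma opapp_ep_mat: "(\<And>c. c \<in> cfgs L \<Longrightarrow> ep d (\<lambda>t. A t c' c)) \<Longrightarrow> ep d (\<lambda>t. opapp L (A t) w c')"
  unfolding opapp_def by (intro ep_sum ep_multc) auto

lemma fold_ep:
  "(\<And>c. c \<in> cfgs L \<Longrightarrow> ep d (\<lambda>t. w t c)) \<Longrightarrow> c \<in> cfgs L \<Longrightarrow>
    ep d (\<lambda>t. fold (\<lambda>i w. opapp L (M i) w) xs (w t) c)"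
proof (induction xs arbitrary: w c)
  case Nil then show ?case by simp
next
  case (Cons i xs)
  have "ep d (\<lambda>t. fold (\<lambda>i w. opapp L (M i) w) xs (opapp L (M i) (w t)) c)"
    using Cons.prems by (intro Cons.IH opapp_ep_vec) auto
  then show ?case by simp
qed

lemma fold_ep_var:
  assumes "distinct xs" "i0 \<in> set xs"
    "\<And>c' c. c' \<in> cfgs L \<Longrightarrow> c \<in> cfgs L \<Longrightarrow> ep d (\<lambda>t. E t c' c)" "c \<in> cfgs L"
  shows "ep d (\<lambda>t. fold (\<lambda>i w. opapp L (E ((lam(i0 := t)) i)) w) xs w0 c)"
  using assms
proof (induction xs arbitrary: w0 c)
  case Nil then show ?case by simp
next
  case (Cons i xs)
  show ?case
  proof (cases "i = i0")
    case True
    then have ni: "i0 \<notin> set xs" using Cons.prems by simp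
    have eq: "fold (\<lambda>i w. opapp L (E ((lam(i0 := t)) i)) w) xs w' =
              fold (\<lambda>i w. opapp L (E (lam i)) w) xs w'" for t w'
      using ni by (intro fold_cong) auto
    have "ep d (\<lambda>t. fold (\<lambda>i w. opapp L (E (lam i)) w) xs (opapp L (E t) w0) c)"
      using Cons.prems by (intro fold_ep opapp_ep_mat) auto
    then show ?thesis using True eq by simp
  next
    case False
    then have "i0 \<in> set xs" "distinct xs" using Cons.prems by auto
    then have "ep d (\<lambda>t. fold (\<lambda>i w. opapp L (E ((lam(i0 := t)) i)) w) xs (opapp L (E (lam i)) w0) c)"
      using Cons.prems by (intro Cons.IH) auto
    then show ?thesis using False by simp
  qed
qed

theorem corollary2p4:
  fixes q sq z :: complex and mu :: "nat \<Rightarrow> complex" and L :: nat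
  assumes "q \<noteq> 0" and "sq ^ 2 = q" and "z = q \<or> z = - (q ^ 3)" and "L \<ge> 1"
  shows "\<exists>H :: (nat \<Rightarrow> complex) \<Rightarrow> complex \<Rightarrow> complex \<Rightarrow> complex.
     (\<forall>lam v1 v2. Ffun q sq z mu L lam v1 v2 = omega z mu L (exp (2 * v1)) * H lam v1 v2)
   \<and> (\<forall>lam v2. \<exists>p :: complex poly. degree p \<le> L - 1 \<and>
        (\<forall>v1. H lam v1 v2 = poly p (exp (2 * v1))))
   \<and> (\<forall>lam v1. \<exists>p :: complex poly. degree p \<le> 2 * L - 1 \<and>
        (\<forall>v2. H lam v1 v2 = poly p (exp (2 * v2))))
   \<and> (\<forall>i\<in>{1..<L}. \<forall>lam v1 v2. \<exists>p :: complex poly. degree p \<le> 2 * L - 1 \<and>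
        (\<forall>t. H (lam(i := t)) v1 v2 = poly p (exp (2 * t))))"
proof -
  define H where "H lam v1 v2 = fold (\<lambda>i w. opapp L (Eop q sq z mu L (lam i)) w) [1..<L]
      (opapp L (Bop q sq z mu L v2) (psi q z mu L v1)) (replicate L 3)" for lam v1 v2
  have r3: "replicate L 3 \<in> cfgs L" by (rule rep_cfgs) simp
  have c1: "Ffun q sq z mu L lam v1 v2 = omega z mu L (exp (2 * v1)) * H lam v1 v2" for lam v1 v2
  proof -
    have "opapp L (Bop q sq z mu L v2) (opapp L (Bop q sq z mu L v1) (vac L))
        = opapp L (Bop q sq z mu L v2) (\<lambda>c. omega z mu L (exp (2 * v1)) * psi q z mu L v1 c)"
      by (intro opapp_cong B_vac)
    also have "\<dots> = (\<lambda>c'. omega z mu L (exp (2 * v1)) * opapp L (Bop q sq z mu L v2) (psi q z mu L v1) c')"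
      by (rule opapp_scale)
    finally show ?thesis unfolding Ffun_def H_def by (simp add: fold_scale)
  qed
  have c2: "ep (L - 1) (\<lambda>v1. H lam v1 v2)" for lam v2
    unfolding H_def by (intro fold_ep opapp_ep_vec psi_ep r3)
  have c3: "ep (2 * L - 1) (\<lambda>v2. H lam v1 v2)" for lam v1
    unfolding H_def Bop_def by (intro fold_ep opapp_ep_mat r3 Tent_ep) simp_all
  have c4: "ep (2 * L - 1) (\<lambda>t. H (lam(i := t)) v1 v2)" if i: "i \<in> {1..<L}" for i lam v1 v2
    unfolding H_def Eop_def using i r3 by (intro fold_ep_var Tent_ep) simp_all
  show ?thesis
    by (rule exI[of _ H]) (use c1 c2 c3 c4 in \<open>auto simp: ep_def\<close>)
qed

end
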